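(* Let $y\in\mathbb{R}^n$, $X\in\mathbb{R}^{n\times p}$, $\lambda>0$, and consider the strong hierarchical lasso with quadratic loss written in the form $$\min_{\phi\in\mathbb{R}^{2p+2p^2}}\ \frac12\|y-\tilde X\phi\|^2+w^T\phi\quad\text{s.t.}\quad D\phi\ge0,\ L\phi=0,$$ with $\phi,\tilde X,w,D,L$ as in the context. Suppose $\hat\phi$ is a solution and let $\mathcal A(\hat\phi)=\{i:[D\hat\phi]_i>0\}$. Let $D_{-\mathcal A(\hat\phi)}$ be the submatrix of rows $D_i$ with $i\notin\mathcal A(\hat\phi)$ and $P=P_{\mathrm{null}(L)\cap\mathrm{null}(D_{-\mathcal A(\hat\phi)})}$. Then $$\hat\phi=(\tilde XP)^+\big(y-(P\tilde X^T)^+w\big)+b$$ for some $b\in\mathrm{null}(\tilde X)\cap\mathrm{null}(L)\cap\mathrm{null}(D_{-\mathcal A(\hat\phi)})$ satisfying $D_i\big[(\tilde XP)^+\big(y-(P\tilde X^T)^+w\big)+b\big]>0$ for all $i\in\mathcal A(\hat\phi)$.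
   Context: $A^+$ denotes the Moore–Penrose pseudoinverse and $P_S$ the orthogonal projection onto a subspace $S$; $\mathrm{null}(\cdot)$ is the null space. Let $x_j$ be the $j$th column of $X$ and $Z\in\mathbb{R}^{n\times p^2}$ the matrix whose column indexed by $(j,k)$ is $x_j*x_k$ (elementwise product), ordered consistently with the vectorization of $p\times p$ matrices. The variable is $\phi=(\beta^+,\beta^-,\mathrm{vec}(\Theta^+),\mathrm{vec}(\Theta^-))$ with $\beta^\pm\in\mathbb{R}^p$, $\Theta^\pm\in\mathbb{R}^{p\times p}$; $\tilde X=(X,\,-X,\,Z/2,\,-Z/2)$ and $w=(\lambda\mathbf 1_p,\lambda\mathbf 1_p,\frac{\lambda}{2}\mathbf 1_{p^2},\frac{\lambda}{2}\mathbf 1_{p^2})$. The rows of $D$ encode the inequality constraints: for each $j$, $\beta^+_j\ge0$, $\beta^-_j\ge0$, and $\beta^+_j+\beta^-_j-\mathbf 1^T(\Theta^+_j+\Theta^-_j)\ge0$ (where $\Theta^\pm_j$ is the $j$th row); and for each $j\ne k$, $\Theta^+_{jk}\ge0$, $\Theta^-_{jk}\ge0$. The rows of $L$ encode the equality constraints $\Theta^+_{jj}=\Theta^-_{jj}=0$ for all $j$ and $\Theta^+-\Theta^-=(\Theta^+-\Theta^-)^T$. (This is the strong hierarchical lasso $\min q(\beta_0,\beta^+-\beta^-,\Theta)+\lambda\mathbf 1^T(\beta^++\beta^-)+\frac\lambda2\sum_{j\ne k}|\Theta_{jk}|$ s.t. $\Theta=\Theta^T$, $\sum_k|\Theta_{jk}|\le\beta^+_j+\beta^-_j$,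 $\beta^\pm\ge0$, with quadratic loss, no intercept, rewritten with $\Theta=\Theta^+-\Theta^-$.) *)

theory Defs
  imports "Jordan_Normal_Form.Matrix_Kernel"
begin

definition pinv :: "real mat \<Rightarrow> real mat" where
  "pinv A = (THE B. B \<in> carrier_mat (dim_col A) (dim_row A) \<and>
      A * B * A = A \<and> B * A * B = B \<and>
      transpose_mat (A * B) = A * B \<and> transpose_mat (B * A) = B * A)"

definition proj_mat :: "nat \<Rightarrow> real vec set \<Rightarrow> real mat" where
  "proj_mat m S = (THE P. P \<in> carrier_mat m m \<and>
      (\<forall>v \<in> carrier_vec m. P *\<^sub>v v \<in> S \<and> (\<forall>s \<in> S. (v - P *\<^sub>v v) \<bullet> s = 0)))"

text \<open>Coordinates of phi = (beta+, beta-, vec Theta+, vec Theta-) in R^(2p+2p^2);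
  vec is column-major: entry (j,k) of a p x p matrix has index j + p*k.\<close>
definition shl_dim :: "nat \<Rightarrow> nat" where "shl_dim p = 2*p + 2*p^2"
definition ix_bp :: "nat \<Rightarrow> nat \<Rightarrow> nat" where "ix_bp p j = j"
definition ix_bm :: "nat \<Rightarrow> nat \<Rightarrow> nat" where "ix_bm p j = p + j"
definition ix_tp :: "nat \<Rightarrow> nat \<Rightarrow> nat \<Rightarrow> nat" where "ix_tp p j k = 2*p + (j + p*k)"
definition ix_tm :: "nat \<Rightarrow> nat \<Rightarrow> nat \<Rightarrow> nat" where "ix_tm p j k = 2*p + p^2 + (j + p*k)"

definition Zmat :: "real mat \<Rightarrow> real mat" where
  "Zmat X = mat (dim_row X) ((dim_col X)^2)
     (\<lambda>(i,c). X $$ (i, c mod dim_col X) * X $$ (i, c div dim_col X))"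

definition Xtil :: "real mat \<Rightarrow> real mat" where
  "Xtil X = (let p = dim_col X; Z = Zmat X in
     mat (dim_row X) (shl_dim p) (\<lambda>(i,c).
       if c < p then X $$ (i, c)
       else if c < 2*p then - X $$ (i, c - p)
       else if c < 2*p + p^2 then Z $$ (i, c - 2*p) / 2
       else - Z $$ (i, c - 2*p - p^2) / 2))"

definition wvec :: "nat \<Rightarrow> real \<Rightarrow> real vec" where
  "wvec p lam = vec (shl_dim p) (\<lambda>c. if c < 2*p then lam else lam / 2)"

text \<open>Row encoding beta+_j + beta-_j - 1^T (Theta+_j + Theta-_j) >= 0 (Theta_j = j-th row).\<close>
definition hier_row :: "nat \<Rightarrow> nat \<Rightarrow> real vec" where
  "hier_row p j = vec (shl_dim p) (\<lambda>c.
     (if c = ix_bp p j \<or> c = ix_bm p j then 1 else 0)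
     - (if \<exists>k < p. c = ix_tp p j k \<or> c = ix_tm p j k then 1 else 0))"

definition Dmat :: "nat \<Rightarrow> real mat" where
  "Dmat p = mat_of_rows (shl_dim p)
     (concat (map (\<lambda>j. [unit_vec (shl_dim p) (ix_bp p j), unit_vec (shl_dim p) (ix_bm p j), hier_row p j]) [0..<p])
      @ concat [[unit_vec (shl_dim p) (ix_tp p j k), unit_vec (shl_dim p) (ix_tm p j k)].
                 j \<leftarrow> [0..<p], k \<leftarrow> [0..<p], j \<noteq> k])"

text \<open>Equality constraints L phi = 0: Theta+_jj = Theta-_jj = 0 and Theta+ - Theta- symmetric.\<close>
definition Lmat :: "nat \<Rightarrow> real mat" where
  "Lmat p = mat_of_rows (shl_dim p)
     (concat (map (\<lambda>j. [unit_vec (shl_dim p) (ix_tp p j j), unit_vec (shl_dim p) (ix_tm p j j)]) [0..<p])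
      @ [ unit_vec (shl_dim p) (ix_tp p j k) - unit_vec (shl_dim p) (ix_tm p j k)
          - unit_vec (shl_dim p) (ix_tp p k j) + unit_vec (shl_dim p) (ix_tm p k j).
          j \<leftarrow> [0..<p], k \<leftarrow> [0..<p], j < k])"

definition shl_obj :: "real mat \<Rightarrow> real vec \<Rightarrow> real \<Rightarrow> real vec \<Rightarrow> real" where
  "shl_obj X y lam \<phi> = (1/2) * ((y - Xtil X *\<^sub>v \<phi>) \<bullet> (y - Xtil X *\<^sub>v \<phi>)) + wvec (dim_col X) lam \<bullet> \<phi>"

definition shl_feasible :: "nat \<Rightarrow> real vec \<Rightarrow> bool" where
  "shl_feasible p \<phi> \<longleftrightarrow> \<phi> \<in> carrier_vec (shl_dim p) \<and>
     (\<forall>i < dim_row (Dmat p). (Dmat p *\<^sub>v \<phi>) $ i \<ge> 0) \<and> Lmat p *\<^sub>v \<phi> = 0\<^sub>v (dim_row (Lmat p))"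

definition active_set :: "nat \<Rightarrow> real vec \<Rightarrow> nat set" where
  "active_set p \<phi> = {i. i < dim_row (Dmat p) \<and> (Dmat p *\<^sub>v \<phi>) $ i > 0}"

definition rows_out :: "real mat \<Rightarrow> nat set \<Rightarrow> real mat" where
  "rows_out D A = mat_of_rows (dim_col D) [row D i. i \<leftarrow> [0..<dim_row D], i \<notin> A]"

end

theory Submission
  imports Defs
begin


fun lspan :: "nat \<Rightarrow> real vec list \<Rightarrow> real vec set" where
  "lspan m [] = {0\<^sub>v m}"
| "lspan m (a # vs) = {c \<cdot>\<^sub>v a + s | c s. s \<in> lspan m vs}"

lemma lspan_carrier: "set vs \<subseteq> carrier_vec m \<Longrightarrow> s \<in> lspan m vs \<Longrightarrow> s \<in> carrier_vec m"
  by (induction vs arbitrary: s) auto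

lemma lspan_zero: "set vs \<subseteq> carrier_vec m \<Longrightarrow> 0\<^sub>v m \<in> lspan m vs"
proof (induction vs)
  case (Cons a vs)
  then have "0\<^sub>v m = 0 \<cdot>\<^sub>v a + 0\<^sub>v m" by (intro eq_vecI) auto
  moreover have "0\<^sub>v m \<in> lspan m vs" using Cons by auto
  ultimately show ?case by (simp only: lspan.simps mem_Collect_eq) blast
qed simp

lemma lspan_add: "set vs \<subseteq> carrier_vec m \<Longrightarrow> s \<in> lspan m vs \<Longrightarrow> t \<in> lspan m vs \<Longrightarrow> s + t \<in> lspan m vs"
proof (induction vs arbitrary: s t)
  case Nil then show ?case by auto
next
  case (Cons a vs)
  from Cons.prems obtain c s' d t' where s: "s = c \<cdot>\<^sub>v a + s'" "s' \<in> lspan m vs"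
    and t: "t = d \<cdot>\<^sub>v a + t'" "t' \<in> lspan m vs" by auto
  have c: "s' \<in> carrier_vec m" "t' \<in> carrier_vec m" "a \<in> carrier_vec m"
    using s t Cons.prems lspan_carrier[of vs m] by auto
  have "s + t = (c + d) \<cdot>\<^sub>v a + (s' + t')" unfolding s t using c
    by (intro eq_vecI) (auto simp: algebra_simps)
  then show ?case using Cons s t by auto
qed

lemma lspan_smult: "set vs \<subseteq> carrier_vec m \<Longrightarrow> s \<in> lspan m vs \<Longrightarrow> k \<cdot>\<^sub>v s \<in> lspan m vs"
proof (induction vs arbitrary: s)
  case Nil then show ?case by auto
next
  case (Cons a vs)
  from Cons.prems obtain c s' where s: "s = c \<cdot>\<^sub>v a + s'" "s' \<in> lspan m vs" by auto
  have c: "s' \<in> carrier_vec m" "a \<in> carrier_vec m"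
    using s Cons.prems lspan_carrier[of vs m] by auto
  have "k \<cdot>\<^sub>v s = (k * c) \<cdot>\<^sub>v a + k \<cdot>\<^sub>v s'" unfolding s using c
    by (intro eq_vecI) (auto simp: algebra_simps)
  then show ?case using Cons s by auto
qed

lemma lspan_minus: "set vs \<subseteq> carrier_vec m \<Longrightarrow> s \<in> lspan m vs \<Longrightarrow> t \<in> lspan m vs \<Longrightarrow> s - t \<in> lspan m vs"
proof -
  assume a: "set vs \<subseteq> carrier_vec m" "s \<in> lspan m vs" "t \<in> lspan m vs"
  then have c: "s \<in> carrier_vec m" "t \<in> carrier_vec m" using lspan_carrier by auto
  have "s - t = s + (-1) \<cdot>\<^sub>v t" using c by (intro eq_vecI) auto
  then show ?thesis using lspan_add[OF a(1,2) lspan_smult[OF a(1,3)]] by simp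
qed

lemma lspan_gen: "set vs \<subseteq> carrier_vec m \<Longrightarrow> a \<in> set vs \<Longrightarrow> a \<in> lspan m vs"
proof (induction vs)
  case Nil then show ?case by auto
next
  case (Cons b vs)
  show ?case
  proof (cases "a = b")
    case True
    have "a = 1 \<cdot>\<^sub>v b + 0\<^sub>v m" using True Cons.prems by (intro eq_vecI) auto
    moreover have "0\<^sub>v m \<in> lspan m vs" using lspan_zero[of vs m] Cons.prems by auto
    ultimately show ?thesis by (simp only: lspan.simps mem_Collect_eq) blast
  next
    case False
    then have "a \<in> lspan m vs" using Cons by auto
    moreover have "a = 0 \<cdot>\<^sub>v b + a" using Cons.prems by (intro eq_vecI) auto
    ultimately show ?thesis by (simp only: lspan.simps mem_Collect_eq) blast
  qed
qed

lemma lspan_orth: "set vs \<subseteq> carrier_vec m \<Longrightarrow> v \<in> carrier_vec m \<Longrightarrow> (\<forall>a\<in>set vs. a \<bullet> v = 0)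
   \<Longrightarrow> s \<in> lspan m vs \<Longrightarrow> s \<bullet> v = 0"
proof (induction vs arbitrary: s)
  case Nil then show ?case by auto
next
  case (Cons a vs)
  from Cons.prems obtain c s' where s: "s = c \<cdot>\<^sub>v a + s'" "s' \<in> lspan m vs" by auto
  have c: "s' \<in> carrier_vec m" "a \<in> carrier_vec m"
    using s Cons.prems lspan_carrier[of vs m] by auto
  have "s \<bullet> v = c * (a \<bullet> v) + s' \<bullet> v" unfolding s
    using c Cons.prems by (simp add: add_scalar_prod_distrib[of _ m])
  then show ?case using Cons s by auto
qed


lemma self_zero: assumes x: "(x::real vec) \<in> carrier_vec n" and z: "x \<bullet> x = 0" shows "x = 0\<^sub>v n"
proof -
  have "(\<Sum>i\<in>{0..<n}. x $ i * x $ i) = 0" using x z by (simp add: scalar_prod_def)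
  then have "\<forall>i\<in>{0..<n}. x $ i * x $ i = 0" by (subst (asm) sum_nonneg_eq_0_iff) auto
  then show ?thesis using x by (intro eq_vecI) auto
qed

lemma minus_eq0: assumes "(x::real vec) \<in> carrier_vec n" "y \<in> carrier_vec n" "x - y = 0\<^sub>v n"
  shows "x = y"
proof (rule eq_vecI)
  fix i assume "i < dim_vec y"
  then have i: "i < n" using assms by simp
  have "(x - y) $ i = 0\<^sub>v n $ i" using arg_cong[OF assms(3), of "\<lambda>v. v $ i"] .
  then show "x $ i = y $ i" using assms(1,2) i by simp
qed (use assms in auto)

lemma vec_eq_dot: assumes x: "(x::real vec) \<in> carrier_vec n" and y: "y \<in> carrier_vec n"
  and h: "\<forall>v\<in>carrier_vec n. x \<bullet> v = y \<bullet> v" shows "x = y"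
proof -
  have d: "x - y \<in> carrier_vec n" using x y by auto
  have "(x - y) \<bullet> (x - y) = x \<bullet> (x - y) - y \<bullet> (x - y)"
    using minus_scalar_prod_distrib[OF x y d] .
  also have "\<dots> = 0" using h d by simp
  finally show ?thesis using self_zero[OF d] minus_eq0[OF x y] by simp
qed

lemma eq_mat_on_vec: assumes A: "(A::real mat) \<in> carrier_mat nr nc" and B: "B \<in> carrier_mat nr nc"
  and h: "\<forall>v\<in>carrier_vec nc. A *\<^sub>v v = B *\<^sub>v v" shows "A = B"
proof (rule mat_col_eqI)
  fix i assume i: "i < dim_col B"
  have "col A i = A *\<^sub>v unit_vec nc i" using A B i by (intro eq_vecI) auto
  moreover have "col B i = B *\<^sub>v unit_vec nc i" using A B i by (intro eq_vecI) auto
  ultimately show "col A i = col B i" using h by auto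
qed (use A B in auto)

definition isproj :: "nat \<Rightarrow> real vec set \<Rightarrow> real mat \<Rightarrow> bool" where
  "isproj m S Q \<longleftrightarrow> Q \<in> carrier_mat m m \<and>
      (\<forall>v \<in> carrier_vec m. Q *\<^sub>v v \<in> S \<and> (\<forall>s \<in> S. (v - Q *\<^sub>v v) \<bullet> s = 0))"

locale subsp =
  fixes m :: nat and S :: "real vec set"
  assumes carr: "S \<subseteq> carrier_vec m"
    and mins: "\<And>s t. s \<in> S \<Longrightarrow> t \<in> S \<Longrightarrow> s - t \<in> S"
begin

lemma isproj_fix: assumes Q: "isproj m S Q" and s: "s \<in> S" shows "Q *\<^sub>v s = s"
proof -
  have Qc: "Q \<in> carrier_mat m m" using Q unfolding isproj_def by auto
  have sc: "s \<in> carrier_vec m" using s carr by auto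
  have Qs: "Q *\<^sub>v s \<in> S" using Q sc unfolding isproj_def by auto
  then have d: "s - Q *\<^sub>v s \<in> S" using mins s by auto
  have "(s - Q *\<^sub>v s) \<bullet> (s - Q *\<^sub>v s) = 0" using Q sc d unfolding isproj_def by auto
  then have "s - Q *\<^sub>v s = 0\<^sub>v m" using self_zero d carr by auto
  then show ?thesis using minus_eq0[of s m "Q *\<^sub>v s"] sc Qc by auto
qed

lemma isproj_idem: assumes Q: "isproj m S Q" shows "Q * Q = Q"
proof -
  have Qc: "Q \<in> carrier_mat m m" using Q unfolding isproj_def by auto
  show ?thesis
  proof (rule eq_mat_on_vec[of _ m m], use Qc in simp, use Qc in simp, intro ballI)
    fix v :: "real vec" assume v: "v \<in> carrier_vec m"
    have "Q *\<^sub>v v \<in> S" using Q v unfolding isproj_def by auto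
    then show "Q * Q *\<^sub>v v = Q *\<^sub>v v" using isproj_fix[OF Q] Qc v by auto
  qed
qed

lemma isproj_sym: assumes Q: "isproj m S Q" shows "transpose_mat Q = Q"
proof -
  have Qc: "Q \<in> carrier_mat m m" using Q unfolding isproj_def by auto
  show ?thesis
  proof (rule eq_mat_on_vec[of _ m m], use Qc in simp, use Qc in simp, intro ballI)
    fix u :: "real vec" assume u: "u \<in> carrier_vec m"
    show "transpose_mat Q *\<^sub>v u = Q *\<^sub>v u"
    proof (rule vec_eq_dot[of _ m], use Qc u in simp, use Qc u in simp, intro ballI)
      fix v :: "real vec" assume v: "v \<in> carrier_vec m"
      have Qu: "Q *\<^sub>v u \<in> carrier_vec m" "Q *\<^sub>v u \<in> S" using Qc u Q unfolding isproj_def by auto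
      have Qv: "Q *\<^sub>v v \<in> carrier_vec m" "Q *\<^sub>v v \<in> S" using Qc v Q unfolding isproj_def by auto
      have 1: "(u - Q *\<^sub>v u) \<bullet> (Q *\<^sub>v v) = 0" using Q u Qv unfolding isproj_def by auto
      have 2: "(v - Q *\<^sub>v v) \<bullet> (Q *\<^sub>v u) = 0" using Q v Qu unfolding isproj_def by auto
      have "(transpose_mat Q *\<^sub>v u) \<bullet> v = u \<bullet> (Q *\<^sub>v v)"
        by (rule transpose_vec_mult_scalar[OF Qc v u])
      also have "\<dots> = (Q *\<^sub>v u) \<bullet> (Q *\<^sub>v v)"
        using 1 minus_scalar_prod_distrib[OF u Qu(1) Qv(1)] by simp
      also have "\<dots> = (Q *\<^sub>v u) \<bullet> v"
        using 2 minus_scalar_prod_distrib[OF v Qv(1) Qu(1)]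
          comm_scalar_prod[OF Qu(1) v] comm_scalar_prod[OF Qu(1) Qv(1)] by simp
      finally show "(transpose_mat Q *\<^sub>v u) \<bullet> v = (Q *\<^sub>v u) \<bullet> v" .
    qed
  qed
qed

lemma isproj_unique: assumes Q1: "isproj m S Q1" and Q2: "isproj m S Q2" shows "Q1 = Q2"
proof -
  have Qc: "Q1 \<in> carrier_mat m m" "Q2 \<in> carrier_mat m m" using Q1 Q2 unfolding isproj_def by auto
  show ?thesis
  proof (rule eq_mat_on_vec[of _ m m], use Qc in simp, use Qc in simp, intro ballI)
    fix v :: "real vec" assume v: "v \<in> carrier_vec m"
    have a: "Q1 *\<^sub>v v \<in> S" "Q2 *\<^sub>v v \<in> S" using Q1 Q2 v unfolding isproj_def by auto
    then have d: "Q1 *\<^sub>v v - Q2 *\<^sub>v v \<in> S" using mins by auto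
    have dc: "Q1 *\<^sub>v v - Q2 *\<^sub>v v \<in> carrier_vec m" using d carr by auto
    have 1: "(v - Q1 *\<^sub>v v) \<bullet> (Q1 *\<^sub>v v - Q2 *\<^sub>v v) = 0" using Q1 v d unfolding isproj_def by auto
    have 2: "(v - Q2 *\<^sub>v v) \<bullet> (Q1 *\<^sub>v v - Q2 *\<^sub>v v) = 0" using Q2 v d unfolding isproj_def by auto
    have e: "Q1 *\<^sub>v v - Q2 *\<^sub>v v = (v - Q2 *\<^sub>v v) - (v - Q1 *\<^sub>v v)"
      using v Qc by (intro eq_vecI) auto
    have "(Q1 *\<^sub>v v - Q2 *\<^sub>v v) \<bullet> (Q1 *\<^sub>v v - Q2 *\<^sub>v v) = 0"
      apply (subst (1) e)
      using minus_scalar_prod_distrib[of "v - Q2 *\<^sub>v v" m "v - Q1 *\<^sub>v v"] 1 2 v Qc dc by simp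
    then have "Q1 *\<^sub>v v - Q2 *\<^sub>v v = 0\<^sub>v m" using self_zero dc by auto
    then show "Q1 *\<^sub>v v = Q2 *\<^sub>v v" using minus_eq0 v Qc by (meson mult_mat_vec_carrier)
  qed
qed

end




lemma lspan_subsp: "set vs \<subseteq> carrier_vec m \<Longrightarrow> subsp m (lspan m vs)"
  by unfold_locales (auto intro: lspan_carrier lspan_minus)

lemma outer_mult: assumes r: "(r::real vec) \<in> carrier_vec m" and v: "v \<in> carrier_vec m"
  shows "mat m m (\<lambda>(i,j). r $ i * r $ j / (r \<bullet> r)) *\<^sub>v v = (r \<bullet> v / (r \<bullet> r)) \<cdot>\<^sub>v r"
proof (rule eq_vecI)
  fix i assume "i < dim_vec ((r \<bullet> v / (r \<bullet> r)) \<cdot>\<^sub>v r)"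
  then have i: "i < m" using r by simp
  have "(mat m m (\<lambda>(i,j). r $ i * r $ j / (r \<bullet> r)) *\<^sub>v v) $ i
      = (\<Sum>j\<in>{0..<m}. r $ i * r $ j / (r \<bullet> r) * v $ j)"
    using i v by (simp add: scalar_prod_def row_def)
  also have "\<dots> = r $ i * (\<Sum>j\<in>{0..<m}. r $ j * v $ j) / (r \<bullet> r)"
    by (simp add: sum_distrib_left sum_divide_distrib algebra_simps)
  also have "\<dots> = ((r \<bullet> v / (r \<bullet> r)) \<cdot>\<^sub>v r) $ i" using i r v by (simp add: scalar_prod_def)
  finally show "(mat m m (\<lambda>(i,j). r $ i * r $ j / (r \<bullet> r)) *\<^sub>v v) $ i = ((r \<bullet> v / (r \<bullet> r)) \<cdot>\<^sub>v r) $ i" .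
qed (use r in auto)

lemma proj_exists: "set vs \<subseteq> carrier_vec m \<Longrightarrow> \<exists>Q. isproj m (lspan m vs) Q"
proof (induction vs)
  case Nil
  have "isproj m (lspan m []) (0\<^sub>m m m)" unfolding isproj_def by (auto simp: scalar_prod_def)
  then show ?case by blast
next
  case (Cons a ws)
  then obtain Q' where Q': "isproj m (lspan m ws) Q'" by auto
  have ws: "set ws \<subseteq> carrier_vec m" and a: "a \<in> carrier_vec m" using Cons.prems by auto
  have Q'c: "Q' \<in> carrier_mat m m" using Q' unfolding isproj_def by auto
  have Q'in: "\<And>v. v \<in> carrier_vec m \<Longrightarrow> Q' *\<^sub>v v \<in> lspan m ws" using Q' unfolding isproj_def by auto
  have Q'o: "\<And>v s. v \<in> carrier_vec m \<Longrightarrow> s \<in> lspan m ws \<Longrightarrow> (v - Q' *\<^sub>v v) \<bullet> s = 0"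
    using Q' unfolding isproj_def by auto
  have lc: "\<And>s. s \<in> lspan m ws \<Longrightarrow> s \<in> carrier_vec m" using lspan_carrier[OF ws] .
  define r where "r = a - Q' *\<^sub>v a"
  have Q'a: "Q' *\<^sub>v a \<in> carrier_vec m" "Q' *\<^sub>v a \<in> lspan m ws" using Q'c a Q'in by auto
  have rc: "r \<in> carrier_vec m" unfolding r_def using a Q'c by auto
  have rs: "\<And>s. s \<in> lspan m ws \<Longrightarrow> r \<bullet> s = 0" unfolding r_def using Q'o a by auto
  have ri: "\<And>i. i < m \<Longrightarrow> r $ i = a $ i - (Q' *\<^sub>v a) $ i" unfolding r_def using a Q'c by simp
  have ar: "a = r + Q' *\<^sub>v a" unfolding r_def using a Q'c by (intro eq_vecI) auto
  show ?case
  proof (cases "r \<bullet> r = 0")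
    case True
    then have r0: "r = 0\<^sub>v m" using self_zero rc by auto
    then have aQ: "a = Q' *\<^sub>v a" using ar Q'a by simp
    have "isproj m (lspan m (a # ws)) Q'"
      unfolding isproj_def
    proof (intro conjI ballI Q'c)
      fix v :: "real vec" assume v: "v \<in> carrier_vec m"
      have "Q' *\<^sub>v v = 0 \<cdot>\<^sub>v a + Q' *\<^sub>v v" using a Q'c v by (intro eq_vecI) auto
      then show "Q' *\<^sub>v v \<in> lspan m (a # ws)" using Q'in[OF v]
        by (simp only: lspan.simps mem_Collect_eq) blast
      fix s assume "s \<in> lspan m (a # ws)"
      then obtain c s' where s: "s = c \<cdot>\<^sub>v a + s'" "s' \<in> lspan m ws" by auto
      have vc: "v - Q' *\<^sub>v v \<in> carrier_vec m" using v Q'c by auto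
      have "(v - Q' *\<^sub>v v) \<bullet> s = c * ((v - Q' *\<^sub>v v) \<bullet> a) + (v - Q' *\<^sub>v v) \<bullet> s'"
        unfolding s using scalar_prod_add_distrib[OF vc _ lc[OF s(2)], of "c \<cdot>\<^sub>v a"] a vc
        by simp
      also have "\<dots> = 0" using Q'o[OF v s(2)] Q'o[OF v Q'a(2)] aQ by simp
      finally show "(v - Q' *\<^sub>v v) \<bullet> s = 0" .
    qed
    then show ?thesis by blast
  next
    case False
    define G where "G = mat m m (\<lambda>(i,j). r $ i * r $ j / (r \<bullet> r))"
    define Q where "Q = Q' + G"
    have Gc: "G \<in> carrier_mat m m" unfolding G_def by simp
    have Qv: "\<And>v. v \<in> carrier_vec m \<Longrightarrow> Q *\<^sub>v v = Q' *\<^sub>v v + (r \<bullet> v / (r \<bullet> r)) \<cdot>\<^sub>v r"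
      unfolding Q_def using add_mult_distrib_mat_vec[OF Q'c Gc] outer_mult[OF rc] G_def by simp
    have "isproj m (lspan m (a # ws)) Q"
      unfolding isproj_def
    proof (intro conjI ballI)
      show "Q \<in> carrier_mat m m" unfolding Q_def using Q'c Gc by simp
      fix v :: "real vec" assume v: "v \<in> carrier_vec m"
      define t where "t = r \<bullet> v / (r \<bullet> r)"
      have Q'v: "Q' *\<^sub>v v \<in> carrier_vec m" "Q' *\<^sub>v v \<in> lspan m ws" using Q'c v Q'in by auto
      have e: "Q *\<^sub>v v = t \<cdot>\<^sub>v a + (Q' *\<^sub>v v - t \<cdot>\<^sub>v (Q' *\<^sub>v a))"
        unfolding Qv[OF v] t_def[symmetric] using a Q'c v rc by (intro eq_vecI) (auto simp: ri algebra_simps)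
      have "Q' *\<^sub>v v - t \<cdot>\<^sub>v (Q' *\<^sub>v a) \<in> lspan m ws"
        by (rule lspan_minus[OF ws Q'v(2) lspan_smult[OF ws Q'a(2)]])
      then show "Q *\<^sub>v v \<in> lspan m (a # ws)" unfolding e
        by (simp only: lspan.simps mem_Collect_eq) blast
      fix s assume "s \<in> lspan m (a # ws)"
      then obtain c s' where s: "s = c \<cdot>\<^sub>v a + s'" "s' \<in> lspan m ws" by auto
      have s'c: "s' \<in> carrier_vec m" using lc s by auto
      define w where "w = v - Q' *\<^sub>v v"
      have wc: "w \<in> carrier_vec m" unfolding w_def using v Q'c by auto
      have vQ: "v - Q *\<^sub>v v = w - t \<cdot>\<^sub>v r" unfolding Qv[OF v] t_def w_def
        using v Q'c rc by (intro eq_vecI) auto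
      have f1: "w \<bullet> s' = 0" unfolding w_def using Q'o[OF v s(2)] .
      have f2: "r \<bullet> s' = 0" using rs[OF s(2)] .
      have f3: "w \<bullet> (Q' *\<^sub>v a) = 0" unfolding w_def using Q'o[OF v Q'a(2)] .
      have f4: "r \<bullet> (Q' *\<^sub>v a) = 0" using rs[OF Q'a(2)] .
      have f5: "r \<bullet> (Q' *\<^sub>v v) = 0" using rs[OF Q'v(2)] .
      have ra: "r \<bullet> a = r \<bullet> r"
        using arg_cong[OF ar, of "\<lambda>x. r \<bullet> x"] scalar_prod_add_distrib[OF rc rc Q'a(1)] f4 by simp
      have wa: "w \<bullet> a = r \<bullet> v"
      proof -
        have "w \<bullet> a = w \<bullet> r" using arg_cong[OF ar, of "\<lambda>x. w \<bullet> x"] scalar_prod_add_distrib[OF wc rc Q'a(1)] f3 by simp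
        also have "\<dots> = r \<bullet> w" using comm_scalar_prod[OF wc rc] .
        also have "\<dots> = r \<bullet> v" unfolding w_def using scalar_prod_minus_distrib[OF rc v Q'v(1)] f5 by simp
        finally show ?thesis .
      qed
      have trr: "t * (r \<bullet> r) = r \<bullet> v" unfolding t_def using False by simp
      have ac: "c \<cdot>\<^sub>v a \<in> carrier_vec m" using a by simp
      have trc: "t \<cdot>\<^sub>v r \<in> carrier_vec m" using rc by simp
      have sc: "s \<in> carrier_vec m" unfolding s using ac s'c by simp
      have ws: "w \<bullet> s = c * (r \<bullet> v)"
        unfolding s using scalar_prod_add_distrib[OF wc ac s'c] f1 wa a wc by simp
      have rs2: "r \<bullet> s = c * (r \<bullet> r)"
        unfolding s using scalar_prod_add_distrib[OF rc ac s'c] f2 ra a rc by simp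
      have "(v - Q *\<^sub>v v) \<bullet> s = w \<bullet> s - t * (r \<bullet> s)"
        unfolding vQ using minus_scalar_prod_distrib[OF wc trc sc] rc sc by simp
      also have "\<dots> = c * (r \<bullet> v) - c * (t * (r \<bullet> r))" unfolding ws rs2 by (simp add: algebra_simps)
      also have "\<dots> = 0" using trr by simp
      finally show "(v - Q *\<^sub>v v) \<bullet> s = 0" .
    qed
    then show ?thesis by blast
  qed
qed


lemma mat_of_cols_Cons_mult: assumes a: "(a::real vec) \<in> carrier_vec m" and ws: "set ws \<subseteq> carrier_vec m"
  and c: "c \<in> carrier_vec (length ws)"
  shows "mat_of_cols m (a # ws) *\<^sub>v vCons c0 c = c0 \<cdot>\<^sub>v a + mat_of_cols m ws *\<^sub>v c"
proof (rule eq_vecI)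
  fix i assume "i < dim_vec (c0 \<cdot>\<^sub>v a + mat_of_cols m ws *\<^sub>v c)"
  then have i: "i < m" using a by simp
  have "(mat_of_cols m (a # ws) *\<^sub>v vCons c0 c) $ i
     = (\<Sum>j\<in>{0..<Suc (length ws)}. (a # ws) ! j $ i * vCons c0 c $ j)"
    using i c by (simp add: scalar_prod_def row_def mat_of_cols_def)
  also have "\<dots> = c0 * a $ i + (\<Sum>j\<in>{0..<length ws}. ws ! j $ i * c $ j)"
    by (subst sum.atLeast0_lessThan_Suc_shift) (simp add: mult.commute)
  also have "\<dots> = (c0 \<cdot>\<^sub>v a + mat_of_cols m ws *\<^sub>v c) $ i"
    using i c a by (simp add: scalar_prod_def row_def mat_of_cols_def)
  finally show "(mat_of_cols m (a # ws) *\<^sub>v vCons c0 c) $ i = (c0 \<cdot>\<^sub>v a + mat_of_cols m ws *\<^sub>v c) $ i" .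
qed (use a in auto)

lemma lspan_range: "set vs \<subseteq> carrier_vec m \<Longrightarrow> s \<in> lspan m vs \<Longrightarrow>
    \<exists>c \<in> carrier_vec (length vs). mat_of_cols m vs *\<^sub>v c = s"
proof (induction vs arbitrary: s)
  case Nil
  then have "mat_of_cols m [] *\<^sub>v vec 0 (\<lambda>_. 0) = s" by (intro eq_vecI) auto
  then show ?case by (intro bexI[of _ "vec 0 (\<lambda>_. 0)"]) auto
next
  case (Cons a ws)
  from Cons.prems obtain c0 s' where s: "s = c0 \<cdot>\<^sub>v a + s'" "s' \<in> lspan m ws" by auto
  from Cons.IH[OF _ s(2)] Cons.prems obtain c where c: "c \<in> carrier_vec (length ws)"
    "mat_of_cols m ws *\<^sub>v c = s'" by auto
  have "mat_of_cols m (a # ws) *\<^sub>v vCons c0 c = s"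
    using mat_of_cols_Cons_mult[of a m ws c c0] Cons.prems c s by auto
  then show ?case using c by (intro bexI[of _ "vCons c0 c"]) auto
qed

lemma kernel2_proj: assumes K1: "K1 \<in> carrier_mat r1 m" and K2: "K2 \<in> carrier_mat r2 m"
  shows "subsp m (mat_kernel K1 \<inter> mat_kernel K2)"
    and "\<exists>P. isproj m (mat_kernel K1 \<inter> mat_kernel K2) P"
proof -
  show "subsp m (mat_kernel K1 \<inter> mat_kernel K2)"
  proof
    show "mat_kernel K1 \<inter> mat_kernel K2 \<subseteq> carrier_vec m" using mat_kernel_carrier K1 by auto
    fix s t assume "s \<in> mat_kernel K1 \<inter> mat_kernel K2" "t \<in> mat_kernel K1 \<inter> mat_kernel K2"
    then show "s - t \<in> mat_kernel K1 \<inter> mat_kernel K2"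
      using K1 K2 by (auto simp: mat_kernel_def mult_minus_distrib_mat_vec)
  qed
  define vs where "vs = rows K1 @ rows K2"
  have vs: "set vs \<subseteq> carrier_vec m" unfolding vs_def using K1 K2 rows_carrier[of K1] rows_carrier[of K2] by auto
  obtain Q where Q: "isproj m (lspan m vs) Q" using proj_exists[OF vs] by auto
  have Qc: "Q \<in> carrier_mat m m" using Q unfolding isproj_def by auto
  have ker: "v \<in> mat_kernel K1 \<inter> mat_kernel K2 \<longleftrightarrow> (\<forall>a\<in>set vs. a \<bullet> v = 0)"
    if v: "v \<in> carrier_vec m" for v
  proof -
    have "v \<in> mat_kernel K1 \<longleftrightarrow> (\<forall>i<r1. row K1 i \<bullet> v = 0)"
      using K1 v by (auto simp: mat_kernel_def vec_eq_iff)
    moreover have "v \<in> mat_kernel K2 \<longleftrightarrow> (\<forall>i<r2. row K2 i \<bullet> v = 0)"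
      using K2 v by (auto simp: mat_kernel_def vec_eq_iff)
    moreover have "set vs = {row K1 i | i. i < r1} \<union> {row K2 i | i. i < r2}"
      unfolding vs_def using K1 K2 by (auto simp: rows_def)
    ultimately show ?thesis by auto
  qed
  have "isproj m (mat_kernel K1 \<inter> mat_kernel K2) (1\<^sub>m m - Q)"
    unfolding isproj_def
  proof (intro conjI ballI)
    show "1\<^sub>m m - Q \<in> carrier_mat m m" using Qc by (simp add: minus_carrier_mat)
    fix v :: "real vec" assume v: "v \<in> carrier_vec m"
    have Qv: "Q *\<^sub>v v \<in> carrier_vec m" "Q *\<^sub>v v \<in> lspan m vs" using Qc v Q unfolding isproj_def by auto
    have Pv: "(1\<^sub>m m - Q) *\<^sub>v v = v - Q *\<^sub>v v"
      using minus_mult_distrib_mat_vec[of "1\<^sub>m m" m m Q v] Qc v by simp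
    have "\<forall>a\<in>set vs. a \<bullet> (v - Q *\<^sub>v v) = 0"
    proof
      fix a assume a: "a \<in> set vs"
      have ac: "a \<in> carrier_vec m" using a vs by auto
      have "(v - Q *\<^sub>v v) \<bullet> a = 0" using Q v lspan_gen[OF vs a] unfolding isproj_def by auto
      then show "a \<bullet> (v - Q *\<^sub>v v) = 0" using comm_scalar_prod[OF ac, of "v - Q *\<^sub>v v"] v Qv by simp
    qed
    then show "(1\<^sub>m m - Q) *\<^sub>v v \<in> mat_kernel K1 \<inter> mat_kernel K2" unfolding Pv
      using ker[of "v - Q *\<^sub>v v"] v Qv by simp
    fix s assume s: "s \<in> mat_kernel K1 \<inter> mat_kernel K2"
    have sc: "s \<in> carrier_vec m" using s mat_kernel_carrier K1 by auto
    have e: "v - (1\<^sub>m m - Q) *\<^sub>v v = Q *\<^sub>v v" unfolding Pv using v Qv by (intro eq_vecI) auto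
    show "(v - (1\<^sub>m m - Q) *\<^sub>v v) \<bullet> s = 0" unfolding e
      using lspan_orth[OF vs sc _ Qv(2)] ker[OF sc] s by simp
  qed
  then show "\<exists>P. isproj m (mat_kernel K1 \<inter> mat_kernel K2) P" by blast
qed




definition penrose :: "real mat \<Rightarrow> real mat \<Rightarrow> bool" where
  "penrose A B \<longleftrightarrow> B \<in> carrier_mat (dim_col A) (dim_row A) \<and>
      A * B * A = A \<and> B * A * B = B \<and>
      transpose_mat (A * B) = A * B \<and> transpose_mat (B * A) = B * A"

lemma penrose_unique: assumes A: "A \<in> carrier_mat n N" and 1: "penrose A B1" and 2: "penrose A B2"
  shows "B1 = B2"
proof -
  have c: "B1 \<in> carrier_mat N n" "B2 \<in> carrier_mat N n" using 1 2 A unfolding penrose_def by auto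
  have ct: "transpose_mat B1 \<in> carrier_mat n N" "transpose_mat B2 \<in> carrier_mat n N"
    "transpose_mat A \<in> carrier_mat N n" using A c by auto
  have 11: "A * B1 * A = A" "B1 * A * B1 = B1" "transpose_mat (A * B1) = A * B1" "transpose_mat (B1 * A) = B1 * A"
    using 1 unfolding penrose_def by auto
  have 22: "A * B2 * A = A" "B2 * A * B2 = B2" "transpose_mat (A * B2) = A * B2" "transpose_mat (B2 * A) = B2 * A"
    using 2 unfolding penrose_def by auto
  have t1: "transpose_mat (A * B1) = transpose_mat B1 * transpose_mat A" using transpose_mult[OF A c(1)] .
  have t2: "transpose_mat (B2 * A) = transpose_mat A * transpose_mat B2" using transpose_mult[OF c(2) A] .
  have tA1: "transpose_mat A = transpose_mat A * (A * B2)"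
  proof -
    have "transpose_mat A = transpose_mat (A * B2 * A)" using 22 by simp
    also have "\<dots> = transpose_mat A * transpose_mat (A * B2)" using transpose_mult[of "A * B2" n n A N] A c by simp
    finally show ?thesis using 22 by simp
  qed
  have tA2: "transpose_mat A = (B1 * A) * transpose_mat A"
  proof -
    have "transpose_mat A = transpose_mat (A * (B1 * A))" using 11 A c by simp
    also have "\<dots> = transpose_mat (B1 * A) * transpose_mat A" using transpose_mult[of A n N "B1 * A" N] A c by simp
    finally show ?thesis using 11 by simp
  qed
  have "B1 = B1 * (A * B1)" using 11 A c by simp
  also have "\<dots> = B1 * (transpose_mat B1 * transpose_mat A)" using 11 t1 by simp
  also have "\<dots> = B1 * (transpose_mat B1 * (transpose_mat A * (A * B2)))" using tA1 by simp
  also have "\<dots> = (B1 * (transpose_mat B1 * transpose_mat A)) * (A * B2)"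
    using assoc_mult_mat[OF c(1) mult_carrier_mat[OF ct(1) ct(3)] mult_carrier_mat[OF A c(2)]]
      assoc_mult_mat[OF ct(1) ct(3) mult_carrier_mat[OF A c(2)]] by metis
  also have "\<dots> = (B1 * (A * B1)) * (A * B2)" using 11 t1 by simp
  also have "\<dots> = B1 * (A * B2)" using 11 A c by simp
  finally have e1: "B1 = B1 * (A * B2)" .
  have "B2 = (B2 * A) * B2" using 22 A c by simp
  also have "\<dots> = (transpose_mat A * transpose_mat B2) * B2" using 22 t2 by simp
  also have "\<dots> = ((B1 * A) * transpose_mat A) * transpose_mat B2 * B2" by (simp only: tA2[symmetric])
  also have "\<dots> = (B1 * A) * ((transpose_mat A * transpose_mat B2) * B2)"
    using assoc_mult_mat[OF mult_carrier_mat[OF c(1) A] ct(3) ct(2)]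
      assoc_mult_mat[OF mult_carrier_mat[OF mult_carrier_mat[OF c(1) A] ct(3)] ct(2) c(2)]
      assoc_mult_mat[OF mult_carrier_mat[OF c(1) A] mult_carrier_mat[OF ct(3) ct(2)] c(2)]
      assoc_mult_mat[OF ct(3) ct(2) c(2)] by metis
  also have "\<dots> = (B1 * A) * ((B2 * A) * B2)" using 22 t2 by simp
  also have "\<dots> = B1 * (A * B2)" using 22 A c by simp
  finally show ?thesis using e1 by simp
qed


lemma penrose_exists: assumes M: "M \<in> carrier_mat n N" shows "\<exists>B. penrose M B"
proof -
  have rs: "set (rows M) \<subseteq> carrier_vec N" using rows_carrier[of M] M by auto
  have cs: "set (cols M) \<subseteq> carrier_vec n" using M by (auto simp: cols_def)
  obtain Q where Q: "isproj N (lspan N (rows M)) Q" using proj_exists[OF rs] by auto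
  obtain R where R: "isproj n (lspan n (cols M)) R" using proj_exists[OF cs] by auto
  interpret SQ: subsp N "lspan N (rows M)" by (rule lspan_subsp[OF rs])
  interpret SR: subsp n "lspan n (cols M)" by (rule lspan_subsp[OF cs])
  have Qc: "Q \<in> carrier_mat N N" using Q unfolding isproj_def by auto
  have Rc: "R \<in> carrier_mat n n" using R unfolding isproj_def by auto
  have rowin: "\<And>i. i < n \<Longrightarrow> row M i \<in> lspan N (rows M)"
    using lspan_gen[OF rs] M by (simp add: rows_def)
  have MQv: "M *\<^sub>v (Q *\<^sub>v v) = M *\<^sub>v v" if v: "v \<in> carrier_vec N" for v
  proof (rule eq_vecI)
    fix i assume "i < dim_vec (M *\<^sub>v v)"
    then have i: "i < n" using M by simp
    have rc: "row M i \<in> carrier_vec N" using M i by simp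
    have Qv: "Q *\<^sub>v v \<in> carrier_vec N" using Qc v by simp
    have "(v - Q *\<^sub>v v) \<bullet> row M i = 0" using Q v rowin[OF i] unfolding isproj_def by auto
    then have "row M i \<bullet> (v - Q *\<^sub>v v) = 0" using comm_scalar_prod[OF rc, of "v - Q *\<^sub>v v"] Qv v by simp
    then have "row M i \<bullet> (Q *\<^sub>v v) = row M i \<bullet> v" using scalar_prod_minus_distrib[OF rc v Qv] by simp
    then show "(M *\<^sub>v (Q *\<^sub>v v)) $ i = (M *\<^sub>v v) $ i" using M i by simp
  qed (use M in auto)
  have MQ: "M * Q = M"
    by (rule eq_mat_on_vec[of _ n N]) (use M Qc MQv in auto)
  have Qnull: "Q *\<^sub>v z = 0\<^sub>v N" if z: "z \<in> carrier_vec N" and Mz: "M *\<^sub>v z = 0\<^sub>v n" for z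
  proof -
    have Qz: "Q *\<^sub>v z \<in> carrier_vec N" "Q *\<^sub>v z \<in> lspan N (rows M)" using Qc z Q unfolding isproj_def by auto
    have "\<forall>a\<in>set (rows M). a \<bullet> z = 0"
    proof
      fix a assume "a \<in> set (rows M)"
      then obtain i where i: "i < n" "a = row M i" using M by (auto simp: rows_def)
      have "(M *\<^sub>v z) $ i = 0" using Mz i by simp
      then show "a \<bullet> z = 0" using i M by simp
    qed
    then have 1: "(Q *\<^sub>v z) \<bullet> z = 0" using lspan_orth[OF rs z _ Qz(2)] by simp
    have 2: "(z - Q *\<^sub>v z) \<bullet> (Q *\<^sub>v z) = 0" using Q z Qz unfolding isproj_def by auto
    have "(Q *\<^sub>v z) \<bullet> (Q *\<^sub>v z) = 0"
      using 1 2 minus_scalar_prod_distrib[OF z Qz(1) Qz(1)] comm_scalar_prod[OF Qz(1) z] by simp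
    then show ?thesis using self_zero Qz by auto
  qed
  have RM: "R * M = M"
  proof (rule mat_col_eqI)
    fix j assume j: "j < dim_col M"
    have "col M j \<in> lspan n (cols M)" using lspan_gen[OF cs] j by (simp add: cols_def)
    then show "col (R * M) j = col M j" using col_mult2[OF Rc M] j M SR.isproj_fix[OF R] by simp
  qed (use Rc M in auto)
  have "\<forall>j<n. \<exists>x. x \<in> carrier_vec N \<and> M *\<^sub>v x = R *\<^sub>v unit_vec n j"
  proof (intro allI impI)
    fix j assume j: "j < n"
    have "R *\<^sub>v unit_vec n j \<in> lspan n (cols M)" using R unfolding isproj_def by auto
    from lspan_range[OF cs this] obtain c where "c \<in> carrier_vec N"
      "mat_of_cols n (cols M) *\<^sub>v c = R *\<^sub>v unit_vec n j" using M by auto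
    then show "\<exists>x. x \<in> carrier_vec N \<and> M *\<^sub>v x = R *\<^sub>v unit_vec n j"
      using mat_of_cols_cols[of M] M by auto
  qed
  then obtain f where f: "\<And>j. j < n \<Longrightarrow> f j \<in> carrier_vec N \<and> M *\<^sub>v f j = R *\<^sub>v unit_vec n j"
    by metis
  define B0 where "B0 = mat N n (\<lambda>(i,j). f j $ i)"
  have B0c: "B0 \<in> carrier_mat N n" unfolding B0_def by simp
  have colB0: "col B0 j = f j" if j: "j < n" for j
  proof -
    have "f j \<in> carrier_vec N" using f j by blast
    then show ?thesis unfolding B0_def using j by (intro eq_vecI) auto
  qed
  have MB0: "M * B0 = R"
  proof (rule mat_col_eqI)
    fix j assume j: "j < dim_col R"
    then have j': "j < n" using Rc by simp
    have "col R j = R *\<^sub>v unit_vec n j" using Rc j' by (intro eq_vecI) auto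
    then show "col (M * B0) j = col R j" using col_mult2[OF M B0c j'] colB0[OF j'] f[OF j'] by simp
  qed (use Rc M B0c in auto)
  define B where "B = Q * B0"
  have Bc: "B \<in> carrier_mat N n" unfolding B_def using Qc B0c by simp
  have MB: "M * B = R" unfolding B_def using MQ MB0 M Qc B0c
    by (metis assoc_mult_mat)
  have BM: "B * M = Q"
  proof (rule eq_mat_on_vec[of _ N N])
    show "B * M \<in> carrier_mat N N" using Bc M by simp
    show "Q \<in> carrier_mat N N" by fact
    show "\<forall>v\<in>carrier_vec N. B * M *\<^sub>v v = Q *\<^sub>v v"
    proof
      fix v :: "real vec" assume v: "v \<in> carrier_vec N"
      define z where "z = B0 *\<^sub>v (M *\<^sub>v v) - v"
      have zc: "z \<in> carrier_vec N" unfolding z_def using B0c M v by simp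
      have "M *\<^sub>v (B0 *\<^sub>v (M *\<^sub>v v)) = M *\<^sub>v v"
        using MB0 RM M B0c Rc v by (metis assoc_mult_mat_vec mult_mat_vec_carrier)
      then have "M *\<^sub>v z = 0\<^sub>v n" unfolding z_def
        using mult_minus_distrib_mat_vec[OF M _ v, of "B0 *\<^sub>v (M *\<^sub>v v)"] B0c M v by simp
      then have "Q *\<^sub>v z = 0\<^sub>v N" using Qnull zc by simp
      then have "Q *\<^sub>v (B0 *\<^sub>v (M *\<^sub>v v)) = Q *\<^sub>v v" unfolding z_def
        using mult_minus_distrib_mat_vec[OF Qc _ v, of "B0 *\<^sub>v (M *\<^sub>v v)"] B0c M v Qc
          minus_eq0[of "Q *\<^sub>v (B0 *\<^sub>v (M *\<^sub>v v))" N "Q *\<^sub>v v"] by simp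
      moreover have "Q * B0 * M = Q * (B0 * M)" using Qc B0c M by simp
      moreover have "Q * (B0 * M) *\<^sub>v v = Q *\<^sub>v ((B0 * M) *\<^sub>v v)"
        by (rule assoc_mult_mat_vec[OF Qc mult_carrier_mat[OF B0c M] v])
      moreover have "(B0 * M) *\<^sub>v v = B0 *\<^sub>v (M *\<^sub>v v)" by (rule assoc_mult_mat_vec[OF B0c M v])
      ultimately show "B * M *\<^sub>v v = Q *\<^sub>v v" unfolding B_def by simp
    qed
  qed
  have "penrose M B" unfolding penrose_def
  proof (intro conjI)
    show "B \<in> carrier_mat (dim_col M) (dim_row M)" using Bc M by simp
    show "M * B * M = M" using MB RM by simp
    show "B * M * B = B" using BM SQ.isproj_idem[OF Q] Qc B0c unfolding B_def
      by (metis assoc_mult_mat)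
    show "transpose_mat (M * B) = M * B" using MB SR.isproj_sym[OF R] by simp
    show "transpose_mat (B * M) = B * M" using BM SQ.isproj_sym[OF Q] by simp
  qed
  then show ?thesis by blast
qed




lemma quad_zero: fixes g c :: real
  assumes ev: "eventually (\<lambda>t. 0 \<le> - t * g + t^2 * c) (at (0::real))" shows "g = 0"
proof -
  have evr: "eventually (\<lambda>t. 0 \<le> - t * g + t^2 * c) (at_right (0::real))"
    and evl: "eventually (\<lambda>t. 0 \<le> - t * g + t^2 * c) (at_left (0::real))"
    using ev eventually_at_split by auto
  have "eventually (\<lambda>t. g \<le> t * c) (at_right (0::real))"
    using evr eventually_at_right_less[of "0::real"]
  proof eventually_elim
    case (elim t)
    then have "0 \<le> t * (- g + t * c)" by (simp add: power2_eq_square algebra_simps)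
    then have "0 \<le> - g + t * c" using elim(2) by (simp add: zero_le_mult_iff)
    then show ?case by simp
  qed
  moreover have "((\<lambda>t. t * c) \<longlongrightarrow> 0) (at_right (0::real))"
    by (auto intro!: tendsto_eq_intros)
  ultimately have g1: "g \<le> 0" using tendsto_lowerbound[of "\<lambda>t. t * c" 0 "at_right 0" g] by auto
  have el: "eventually (\<lambda>x. x \<in> {-1<..<(0::real)}) (at_left 0)"
    by (rule eventually_at_left_real) simp
  have "eventually (\<lambda>t. t * c \<le> g) (at_left (0::real))"
    using evl el
  proof eventually_elim
    case (elim t)
    then have t: "t < 0" by simp
    have "0 \<le> (- t) * (g - t * c)" using elim(1) by (simp add: power2_eq_square algebra_simps)
    then have "0 \<le> g - t * c" using t by (simp add: zero_le_mult_iff) (use mult_le_0_iff in force)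
    then show ?case by simp
  qed
  moreover have "((\<lambda>t. t * c) \<longlongrightarrow> 0) (at_left (0::real))"
    by (auto intro!: tendsto_eq_intros)
  ultimately have g2: "0 \<le> g" using tendsto_upperbound[of "\<lambda>t. t * c" 0 "at_left 0" g] by auto
  show ?thesis using g1 g2 by simp
qed

lemma pinv_penrose: assumes M: "M \<in> carrier_mat n N" shows "penrose M (pinv M)"
proof -
  have "\<exists>!B. penrose M B" using penrose_exists[OF M] penrose_unique[OF M] by blast
  then show ?thesis unfolding pinv_def penrose_def[symmetric] by (rule theI')
qed

lemma penrose_transpose: assumes M: "M \<in> carrier_mat n N" and P: "penrose M B"
  shows "penrose (transpose_mat M) (transpose_mat B)"
proof -
  have Bc: "B \<in> carrier_mat N n" using P M unfolding penrose_def by auto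
  have p: "M * B * M = M" "B * M * B = B" "transpose_mat (M * B) = M * B" "transpose_mat (B * M) = B * M"
    using P unfolding penrose_def by auto
  have t1: "transpose_mat M * transpose_mat B = B * M" using transpose_mult[OF Bc M] p(4) by simp
  have t2: "transpose_mat B * transpose_mat M = M * B" using transpose_mult[OF M Bc] p(3) by simp
  show ?thesis unfolding penrose_def
  proof (intro conjI)
    show "transpose_mat B \<in> carrier_mat (dim_col (transpose_mat M)) (dim_row (transpose_mat M))"
      using Bc M by simp
    have "transpose_mat (M * B * M) = transpose_mat M * transpose_mat (M * B)"
      using transpose_mult[of "M * B" n n M N] M Bc by simp
    also have "\<dots> = transpose_mat M * (transpose_mat B * transpose_mat M)"
      using transpose_mult[OF M Bc] by simp
    also have "\<dots> = transpose_mat M * transpose_mat B * transpose_mat M" using M Bc by simp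
    finally show "transpose_mat M * transpose_mat B * transpose_mat M = transpose_mat M" using p by simp
    have "transpose_mat (B * M * B) = transpose_mat B * transpose_mat (B * M)"
      using transpose_mult[of "B * M" N N B n] M Bc by simp
    also have "\<dots> = transpose_mat B * (transpose_mat M * transpose_mat B)"
      using transpose_mult[OF Bc M] by simp
    also have "\<dots> = transpose_mat B * transpose_mat M * transpose_mat B" using M Bc by simp
    finally show "transpose_mat B * transpose_mat M * transpose_mat B = transpose_mat B" using p by simp
    show "transpose_mat (transpose_mat M * transpose_mat B) = transpose_mat M * transpose_mat B"
      using t1 p by simp
    show "transpose_mat (transpose_mat B * transpose_mat M) = transpose_mat B * transpose_mat M"
      using t2 p by simp
  qed
qed

lemma pinv_transpose: assumes M: "M \<in> carrier_mat n N"
  shows "pinv (transpose_mat M) = transpose_mat (pinv M)"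
proof -
  have Mt: "transpose_mat M \<in> carrier_mat N n" using M by simp
  show ?thesis using penrose_unique[OF Mt pinv_penrose[OF Mt] penrose_transpose[OF M pinv_penrose[OF M]]] .
qed

lemma proj_mat_isproj: assumes S: "subsp m S" and P: "isproj m S P" shows "proj_mat m S = P"
proof -
  have "\<exists>!P. isproj m S P" using P subsp.isproj_unique[OF S] by blast
  then have "isproj m S (proj_mat m S)" unfolding proj_mat_def isproj_def[symmetric] by (rule theI')
  then show ?thesis using subsp.isproj_unique[OF S] P by blast
qed




lemma rows_out_row: assumes Dc: "(D::real mat) \<in> carrier_mat r m" and i: "i < r" "i \<notin> A"
  and v: "v \<in> mat_kernel (rows_out D A)" shows "row D i \<bullet> v = 0"
proof -
  define rs where "rs = [row D i. i \<leftarrow> [0..<dim_row D], i \<notin> A]"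
  have rsc: "set rs \<subseteq> carrier_vec m" unfolding rs_def using Dc by auto
  have Rc: "rows_out D A \<in> carrier_mat (length rs) m" unfolding rows_out_def rs_def[symmetric] using Dc by simp
  have "row D i \<in> set rs" unfolding rs_def using Dc i by auto
  then obtain j where j: "j < length rs" "rs ! j = row D i" by (auto simp: in_set_conv_nth)
  have "rows_out D A *\<^sub>v v = 0\<^sub>v (length rs)" using mat_kernelD(2)[OF Rc v] .
  then have "(rows_out D A *\<^sub>v v) $ j = 0" using j by simp
  moreover have "row (rows_out D A) j = rs ! j" unfolding rows_out_def rs_def[symmetric]
    using j rsc Dc nth_mem[OF j(1)] by (intro mat_of_rows_row) auto
  ultimately show ?thesis using j Rc by simp
qed

lemma rows_out_row2: assumes Dc: "(D::real mat) \<in> carrier_mat r m" and v: "v \<in> carrier_vec m"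
  and h: "\<And>i. i < r \<Longrightarrow> i \<notin> A \<Longrightarrow> row D i \<bullet> v = 0" shows "v \<in> mat_kernel (rows_out D A)"
proof -
  define rs where "rs = [row D i. i \<leftarrow> [0..<dim_row D], i \<notin> A]"
  have rsc: "set rs \<subseteq> carrier_vec m" unfolding rs_def using Dc by auto
  have Rc: "rows_out D A \<in> carrier_mat (length rs) m" unfolding rows_out_def rs_def[symmetric] using Dc by simp
  have "rows_out D A *\<^sub>v v = 0\<^sub>v (length rs)"
  proof (rule eq_vecI)
    fix j assume "j < dim_vec (0\<^sub>v (length rs) :: real vec)"
    then have j: "j < length rs" by simp
    then have "rs ! j \<in> set rs" by simp
    then obtain i where i: "i < r" "i \<notin> A" "rs ! j = row D i" unfolding rs_def using Dc by auto
    have "row (rows_out D A) j = rs ! j" unfolding rows_out_def rs_def[symmetric]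
      using j rsc Dc nth_mem[OF j] by (intro mat_of_rows_row) auto
    then show "(rows_out D A *\<^sub>v v) $ j = 0\<^sub>v (length rs) $ j" using j Rc i h by simp
  qed (use Rc in simp)
  then show ?thesis using Rc v by (intro mat_kernelI) auto
qed

lemma quad_expand: assumes q: "(q::real vec) \<in> carrier_vec n" and a: "a \<in> carrier_vec n"
  shows "(q - t \<cdot>\<^sub>v a) \<bullet> (q - t \<cdot>\<^sub>v a) = q \<bullet> q - 2 * t * (q \<bullet> a) + t^2 * (a \<bullet> a)"
  using q a by (simp add: scalar_prod_def algebra_simps power2_eq_square sum.distrib sum_subtractf
      sum_distrib_left)




theorem lemma1:
  fixes X :: "real mat" and y :: "real vec" and lam :: real and n p :: nat
    and \<phi>h :: "real vec"
  assumes X: "X \<in> carrier_mat n p"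
    and y: "y \<in> carrier_vec n"
    and lam: "lam > 0"
    and feas: "shl_feasible p \<phi>h"
    and opt: "\<forall>\<phi>. shl_feasible p \<phi> \<longrightarrow> shl_obj X y lam \<phi>h \<le> shl_obj X y lam \<phi>"
  shows "let A = active_set p \<phi>h;
             DmA = rows_out (Dmat p) A;
             P = proj_mat (shl_dim p) (mat_kernel (Lmat p) \<inter> mat_kernel DmA);
             u = pinv (Xtil X * P) *\<^sub>v (y - pinv (P * transpose_mat (Xtil X)) *\<^sub>v wvec p lam)
         in \<exists>b. b \<in> mat_kernel (Xtil X) \<inter> mat_kernel (Lmat p) \<inter> mat_kernel DmA \<and>
                \<phi>h = u + b \<and> (\<forall>i \<in> A. (Dmat p *\<^sub>v (u + b)) $ i > 0)"
proof -
  define N where "N = shl_dim p"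
  define A where "A = active_set p \<phi>h"
  define D where "D = Dmat p"
  define L where "L = Lmat p"
  define DmA where "DmA = rows_out D A"
  define S where "S = mat_kernel L \<inter> mat_kernel DmA"
  define P where "P = proj_mat N S"
  define Xt where "Xt = Xtil X"
  define w where "w = wvec p lam"
  define M where "M = Xt * P"
  define B where "B = pinv M"
  define u where "u = B *\<^sub>v (y - transpose_mat B *\<^sub>v w)"
  have Xt: "Xt \<in> carrier_mat n N" unfolding Xt_def Xtil_def N_def Let_def using X by simp
  have wc: "w \<in> carrier_vec N" unfolding w_def wvec_def N_def by simp
  have "dim_col D = N" unfolding D_def Dmat_def N_def mat_of_rows_def by (rule dim_col_mat)
  then have Dc: "D \<in> carrier_mat (dim_row D) N" unfolding carrier_mat_def by blast
  have "dim_col L = N" unfolding L_def Lmat_def N_def mat_of_rows_def by (rule dim_col_mat)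
  then have Lc: "L \<in> carrier_mat (dim_row L) N" unfolding carrier_mat_def by blast
  have "dim_col DmA = dim_col D" unfolding DmA_def rows_out_def mat_of_rows_def by (rule dim_col_mat)
  then have DmAc: "DmA \<in> carrier_mat (dim_row DmA) N" using Dc unfolding carrier_mat_def by simp
  have obj: "\<And>\<phi>. shl_obj X y lam \<phi> = 1/2 * ((y - Xt *\<^sub>v \<phi>) \<bullet> (y - Xt *\<^sub>v \<phi>)) + w \<bullet> \<phi>"
    unfolding shl_obj_def Xt_def w_def using X by simp
  have feasD: "shl_feasible p \<phi> \<longleftrightarrow> \<phi> \<in> carrier_vec N \<and> (\<forall>i < dim_row D. (D *\<^sub>v \<phi>) $ i \<ge> 0)
      \<and> L *\<^sub>v \<phi> = 0\<^sub>v (dim_row L)" for \<phi>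
    unfolding shl_feasible_def N_def D_def L_def ..
  have \<phi>c: "\<phi>h \<in> carrier_vec N" and \<phi>D: "\<And>i. i < dim_row D \<Longrightarrow> (D *\<^sub>v \<phi>h) $ i \<ge> 0"
    and \<phi>L: "L *\<^sub>v \<phi>h = 0\<^sub>v (dim_row L)" using feas feasD by auto
  have Adef: "\<And>i. i \<in> A \<longleftrightarrow> i < dim_row D \<and> (D *\<^sub>v \<phi>h) $ i > 0"
    unfolding A_def active_set_def D_def by blast
  interpret SS: subsp N S unfolding S_def by (rule kernel2_proj(1)[OF Lc DmAc])
  obtain P0 where P0: "isproj N S P0" using kernel2_proj(2)[OF Lc DmAc] unfolding S_def by blast
  have PP: "isproj N S P" unfolding P_def proj_mat_isproj[OF SS.subsp_axioms P0] by (rule P0)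
  have Pc: "P \<in> carrier_mat N N" using PP unfolding isproj_def by auto
  have PS: "\<And>v. v \<in> carrier_vec N \<Longrightarrow> P *\<^sub>v v \<in> S" using PP unfolding isproj_def by auto
  have Psym: "transpose_mat P = P" using SS.isproj_sym[OF PP] .
  have Pidem: "P * P = P" using SS.isproj_idem[OF PP] .
  have Pfix: "\<And>s. s \<in> S \<Longrightarrow> P *\<^sub>v s = s" using SS.isproj_fix[OF PP] .
  have Sc: "\<And>s. s \<in> S \<Longrightarrow> s \<in> carrier_vec N" using SS.carr by auto
  have SL: "\<And>s. s \<in> S \<Longrightarrow> L *\<^sub>v s = 0\<^sub>v (dim_row L)" unfolding S_def using mat_kernelD(2)[OF Lc] by blast
  have SD: "\<And>s i. s \<in> S \<Longrightarrow> i < dim_row D \<Longrightarrow> i \<notin> A \<Longrightarrow> row D i \<bullet> s = 0"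
    unfolding S_def DmA_def using rows_out_row[OF Dc] by blast
  have \<phi>S: "\<phi>h \<in> S"
  proof -
    have "\<phi>h \<in> mat_kernel L" by (rule mat_kernelI[OF Lc \<phi>c \<phi>L])
    moreover have "\<phi>h \<in> mat_kernel DmA" unfolding DmA_def
    proof (rule rows_out_row2[OF Dc \<phi>c])
      fix i assume i: "i < dim_row D" "i \<notin> A"
      have "\<not> (D *\<^sub>v \<phi>h) $ i > 0" using Adef[of i] i by blast
      then have "(D *\<^sub>v \<phi>h) $ i = 0" using \<phi>D[OF i(1)] by linarith
      then show "row D i \<bullet> \<phi>h = 0" using index_mult_mat_vec[OF i(1), of \<phi>h] by metis
    qed
    ultimately show ?thesis unfolding S_def by blast
  qed
  define q where "q = y - Xt *\<^sub>v \<phi>h"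
  have qc: "q \<in> carrier_vec n" unfolding q_def using y Xt \<phi>c by simp
  have KKT: "q \<bullet> (Xt *\<^sub>v d) = w \<bullet> d" if d: "d \<in> S" for d
  proof -
    have dc: "d \<in> carrier_vec N" using Sc d .
    define a where "a = Xt *\<^sub>v d"
    have ac: "a \<in> carrier_vec n" unfolding a_def using Xt dc by simp
    define g where "g = q \<bullet> a - w \<bullet> d"
    define c where "c = (a \<bullet> a) / 2"
    have iden: "shl_obj X y lam (\<phi>h + t \<cdot>\<^sub>v d) = shl_obj X y lam \<phi>h - t * g + t^2 * c" for t
    proof -
      have "Xt *\<^sub>v (\<phi>h + t \<cdot>\<^sub>v d) = Xt *\<^sub>v \<phi>h + t \<cdot>\<^sub>v a" unfolding a_def
        using mult_add_distrib_mat_vec[OF Xt \<phi>c, of "t \<cdot>\<^sub>v d"] mult_mat_vec[OF Xt dc] dc by simp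
      then have e1: "y - Xt *\<^sub>v (\<phi>h + t \<cdot>\<^sub>v d) = q - t \<cdot>\<^sub>v a" unfolding q_def
        using y Xt \<phi>c ac by (intro eq_vecI) auto
      have e2: "w \<bullet> (\<phi>h + t \<cdot>\<^sub>v d) = w \<bullet> \<phi>h + t * (w \<bullet> d)"
        using scalar_prod_add_distrib[OF wc \<phi>c, of "t \<cdot>\<^sub>v d"] dc wc by simp
      show ?thesis unfolding obj e1 e2 quad_expand[OF qc ac] q_def[symmetric] g_def c_def
        by (simp add: algebra_simps)
    qed
    have ev: "eventually (\<lambda>t. shl_feasible p (\<phi>h + t \<cdot>\<^sub>v d)) (at (0::real))"
    proof -
      have Dv: "(D *\<^sub>v (\<phi>h + t \<cdot>\<^sub>v d)) $ i = (D *\<^sub>v \<phi>h) $ i + t * (row D i \<bullet> d)"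
        if i: "i < dim_row D" for i t
      proof -
        have "D *\<^sub>v (\<phi>h + t \<cdot>\<^sub>v d) = D *\<^sub>v \<phi>h + t \<cdot>\<^sub>v (D *\<^sub>v d)"
          using mult_add_distrib_mat_vec[OF Dc \<phi>c, of "t \<cdot>\<^sub>v d"] mult_mat_vec[OF Dc dc] dc by simp
        then have "(D *\<^sub>v (\<phi>h + t \<cdot>\<^sub>v d)) $ i = (D *\<^sub>v \<phi>h) $ i + t * (D *\<^sub>v d) $ i"
          using i by simp
        then show ?thesis using index_mult_mat_vec[OF i, of d] by simp
      qed
      have Lv: "L *\<^sub>v (\<phi>h + t \<cdot>\<^sub>v d) = 0\<^sub>v (dim_row L)" for t
      proof -
        have "L *\<^sub>v (\<phi>h + t \<cdot>\<^sub>v d) = L *\<^sub>v \<phi>h + t \<cdot>\<^sub>v (L *\<^sub>v d)"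
          using mult_add_distrib_mat_vec[OF Lc \<phi>c, of "t \<cdot>\<^sub>v d"] mult_mat_vec[OF Lc dc] dc by simp
        then show ?thesis using \<phi>L SL[OF d] by (intro eq_vecI) auto
      qed
      have "\<forall>i\<in>{..<dim_row D}. eventually (\<lambda>t. 0 \<le> (D *\<^sub>v \<phi>h) $ i + t * (row D i \<bullet> d)) (at (0::real))"
      proof
        fix i assume "i \<in> {..<dim_row D}"
        then have i: "i < dim_row D" by simp
        show "eventually (\<lambda>t. 0 \<le> (D *\<^sub>v \<phi>h) $ i + t * (row D i \<bullet> d)) (at (0::real))"
        proof (cases "i \<in> A")
          case True
          then have pos: "(D *\<^sub>v \<phi>h) $ i > 0" using Adef[of i] by blast
          have "((\<lambda>t. (D *\<^sub>v \<phi>h) $ i + t * (row D i \<bullet> d)) \<longlongrightarrow> (D *\<^sub>v \<phi>h) $ i + 0 * (row D i \<bullet> d)) (at (0::real))"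
            by (intro tendsto_add tendsto_const tendsto_mult tendsto_ident_at)
          then have "eventually (\<lambda>t. 0 < (D *\<^sub>v \<phi>h) $ i + t * (row D i \<bullet> d)) (at (0::real))"
            using pos by (intro order_tendstoD(1)) simp_all
          then show ?thesis by (rule eventually_mono) simp
        next
          case False
          then have "\<not> (D *\<^sub>v \<phi>h) $ i > 0" using Adef[of i] i by blast
          then have "(D *\<^sub>v \<phi>h) $ i = 0" using \<phi>D[OF i] by linarith
          moreover have "row D i \<bullet> d = 0" using SD[OF d i False] .
          ultimately show ?thesis by simp
        qed
      qed
      then have "eventually (\<lambda>t. \<forall>i\<in>{..<dim_row D}. 0 \<le> (D *\<^sub>v \<phi>h) $ i + t * (row D i \<bullet> d)) (at (0::real))"
        using eventually_ball_finite[of "{..<dim_row D}" "\<lambda>t i. 0 \<le> (D *\<^sub>v \<phi>h) $ i + t * (row D i \<bullet> d)" "at (0::real)"]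
        by blast
      then show ?thesis
      proof (rule eventually_mono)
        fix t :: real assume tt: "\<forall>i\<in>{..<dim_row D}. 0 \<le> (D *\<^sub>v \<phi>h) $ i + t * (row D i \<bullet> d)"
        have c2: "\<forall>i<dim_row D. 0 \<le> (D *\<^sub>v (\<phi>h + t \<cdot>\<^sub>v d)) $ i"
        proof (intro allI impI)
          fix i assume i: "i < dim_row D"
          then have "0 \<le> (D *\<^sub>v \<phi>h) $ i + t * (row D i \<bullet> d)" using tt by blast
          then show "0 \<le> (D *\<^sub>v (\<phi>h + t \<cdot>\<^sub>v d)) $ i" using Dv[OF i, of t] by linarith
        qed
        have c1: "\<phi>h + t \<cdot>\<^sub>v d \<in> carrier_vec N" using \<phi>c dc by simp
        show "shl_feasible p (\<phi>h + t \<cdot>\<^sub>v d)" unfolding feasD using c1 c2 Lv by blast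
      qed
    qed
    have "eventually (\<lambda>t. 0 \<le> - t * g + t^2 * c) (at (0::real))"
      using ev
    proof (rule eventually_mono)
      fix t :: real assume "shl_feasible p (\<phi>h + t \<cdot>\<^sub>v d)"
      then have "shl_obj X y lam \<phi>h \<le> shl_obj X y lam (\<phi>h + t \<cdot>\<^sub>v d)" using opt by blast
      then show "0 \<le> - t * g + t^2 * c" unfolding iden by simp
    qed
    then have "g = 0" by (rule quad_zero)
    then show ?thesis unfolding g_def a_def by simp
  qed
  define T where "T = transpose_mat M"
  have Mc: "M \<in> carrier_mat n N" unfolding M_def using Xt Pc by simp
  have Tc: "T \<in> carrier_mat N n" unfolding T_def using Mc by simp
  have TPX: "T = P * transpose_mat Xt" unfolding T_def M_def using transpose_mult[OF Xt Pc] Psym by simp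
  have Bpen: "penrose M B" unfolding B_def by (rule pinv_penrose[OF Mc])
  have Bc: "B \<in> carrier_mat N n" using Bpen Mc unfolding penrose_def by auto
  have BTc: "transpose_mat B \<in> carrier_mat n N" using Bc by simp
  have XTc: "transpose_mat Xt \<in> carrier_mat N n" using Xt by simp
  have p1: "M * B * M = M" and p2: "B * M * B = B" and p3: "transpose_mat (M * B) = M * B"
    and p4: "transpose_mat (B * M) = B * M" using Bpen unfolding penrose_def by auto
  have pinvT: "pinv (P * transpose_mat Xt) = transpose_mat B"
    unfolding TPX[symmetric] T_def B_def by (rule pinv_transpose[OF Mc])
  have Tq: "T *\<^sub>v q = P *\<^sub>v w"
  proof -
    define h where "h = transpose_mat Xt *\<^sub>v q - w"
    have hc: "h \<in> carrier_vec N" unfolding h_def using XTc qc wc by simp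
    have hd: "h \<bullet> d = 0" if d: "d \<in> S" for d
    proof -
      have dc: "d \<in> carrier_vec N" using Sc d .
      have "h \<bullet> d = (transpose_mat Xt *\<^sub>v q) \<bullet> d - w \<bullet> d"
        unfolding h_def using minus_scalar_prod_distrib[of "transpose_mat Xt *\<^sub>v q" N w d] XTc qc wc dc by simp
      also have "(transpose_mat Xt *\<^sub>v q) \<bullet> d = q \<bullet> (Xt *\<^sub>v d)"
        by (rule transpose_vec_mult_scalar[OF Xt dc qc])
      finally show ?thesis using KKT[OF d] by simp
    qed
    have "P *\<^sub>v h = 0\<^sub>v N"
    proof (rule vec_eq_dot[of _ N])
      show "P *\<^sub>v h \<in> carrier_vec N" using Pc hc by simp
      show "0\<^sub>v N \<in> carrier_vec N" by simp
      show "\<forall>v\<in>carrier_vec N. (P *\<^sub>v h) \<bullet> v = 0\<^sub>v N \<bullet> v"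
      proof
        fix v :: "real vec" assume v: "v \<in> carrier_vec N"
        have "(P *\<^sub>v h) \<bullet> v = (transpose_mat P *\<^sub>v h) \<bullet> v" using Psym by simp
        also have "\<dots> = h \<bullet> (P *\<^sub>v v)" by (rule transpose_vec_mult_scalar[OF Pc v hc])
        also have "\<dots> = 0" using hd[OF PS[OF v]] .
        finally show "(P *\<^sub>v h) \<bullet> v = 0\<^sub>v N \<bullet> v" using v by simp
      qed
    qed
    moreover have "P *\<^sub>v h = P *\<^sub>v (transpose_mat Xt *\<^sub>v q) - P *\<^sub>v w"
      unfolding h_def using mult_minus_distrib_mat_vec[OF Pc, of "transpose_mat Xt *\<^sub>v q" w] XTc qc wc by simp
    ultimately have "P *\<^sub>v (transpose_mat Xt *\<^sub>v q) = P *\<^sub>v w"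
      using minus_eq0[of "P *\<^sub>v (transpose_mat Xt *\<^sub>v q)" N "P *\<^sub>v w"] Pc XTc qc wc by simp
    then show ?thesis unfolding TPX using assoc_mult_mat_vec[OF Pc XTc qc] by simp
  qed
  define z where "z = y - transpose_mat B *\<^sub>v w"
  have zc: "z \<in> carrier_vec n" unfolding z_def using y BTc wc by simp
  have uz: "u = B *\<^sub>v z" unfolding u_def z_def ..
  have BM: "B * M = P * transpose_mat Xt * transpose_mat B"
    using p4 transpose_mult[OF Bc Mc] TPX unfolding T_def by simp
  have BB: "B = P * (transpose_mat Xt * (transpose_mat B * B))"
  proof -
    have "B = B * M * B" using p2 by simp
    also have "\<dots> = P * transpose_mat Xt * transpose_mat B * B" using BM by simp
    also have "\<dots> = P * (transpose_mat Xt * (transpose_mat B * B))"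
      using assoc_mult_mat[OF mult_carrier_mat[OF Pc XTc] BTc Bc]
        assoc_mult_mat[OF Pc XTc mult_carrier_mat[OF BTc Bc]] by metis
    finally show ?thesis .
  qed
  have uc: "u \<in> carrier_vec N" unfolding uz using Bc zc by simp
  have uS: "u \<in> S"
  proof -
    have c1: "transpose_mat Xt * (transpose_mat B * B) \<in> carrier_mat N n" using XTc BTc Bc by simp
    have "u = P *\<^sub>v ((transpose_mat Xt * (transpose_mat B * B)) *\<^sub>v z)"
      unfolding uz using BB assoc_mult_mat_vec[OF Pc c1 zc] by metis
    then show ?thesis using PS c1 zc by simp
  qed
  have I3: "T * (M * B) = T"
  proof -
    have "transpose_mat (M * B * M) = T * transpose_mat (M * B)"
      unfolding T_def using transpose_mult[of "M * B" n n M N] Mc Bc by simp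
    then show ?thesis using p1 p3 unfolding T_def by simp
  qed
  have I5: "(B * M) * T = T"
  proof -
    have "transpose_mat (M * (B * M)) = transpose_mat (B * M) * T"
      unfolding T_def using transpose_mult[of M n N "B * M" N] Mc Bc by simp
    moreover have "M * (B * M) = M" using p1 Mc Bc by simp
    ultimately show ?thesis using p4 unfolding T_def by simp
  qed
  have I4: "T * transpose_mat B = B * M" using transpose_mult[OF Bc Mc] p4 unfolding T_def by simp
  have I6: "M * P = M" unfolding M_def using Pidem Xt Pc by simp
  have BMc: "B * M \<in> carrier_mat N N" using Bc Mc by simp
  have MBc: "M * B \<in> carrier_mat n n" using Bc Mc by simp
  have V1: "T *\<^sub>v (M *\<^sub>v u) = T *\<^sub>v z"
  proof -
    have "M *\<^sub>v u = (M * B) *\<^sub>v z" unfolding uz using assoc_mult_mat_vec[OF Mc Bc zc] by simp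
    then have "T *\<^sub>v (M *\<^sub>v u) = (T * (M * B)) *\<^sub>v z" using assoc_mult_mat_vec[OF Tc MBc zc] by simp
    then show ?thesis using I3 by simp
  qed
  have V3: "T *\<^sub>v (transpose_mat B *\<^sub>v w) = T *\<^sub>v q"
  proof -
    have "T *\<^sub>v (transpose_mat B *\<^sub>v w) = (T * transpose_mat B) *\<^sub>v w"
      using assoc_mult_mat_vec[OF Tc BTc wc] by simp
    also have "\<dots> = (B * M) *\<^sub>v w" using I4 by simp
    also have "\<dots> = (B * (M * P)) *\<^sub>v w" using I6 by simp
    also have "\<dots> = ((B * M) * P) *\<^sub>v w" using Bc Mc Pc by simp
    also have "\<dots> = (B * M) *\<^sub>v (P *\<^sub>v w)" using assoc_mult_mat_vec[OF BMc Pc wc] .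
    also have "\<dots> = (B * M) *\<^sub>v (T *\<^sub>v q)" using Tq by simp
    also have "\<dots> = ((B * M) * T) *\<^sub>v q" using assoc_mult_mat_vec[OF BMc Tc qc] by simp
    also have "\<dots> = T *\<^sub>v q" using I5 by simp
    finally show ?thesis .
  qed
  have Mphi: "M *\<^sub>v \<phi>h = Xt *\<^sub>v \<phi>h"
    unfolding M_def using assoc_mult_mat_vec[OF Xt Pc \<phi>c] Pfix[OF \<phi>S] by simp
  have yq: "y - q = Xt *\<^sub>v \<phi>h" unfolding q_def using y Xt \<phi>c by (intro eq_vecI) auto
  have TMu: "T *\<^sub>v (M *\<^sub>v u) = T *\<^sub>v (M *\<^sub>v \<phi>h)"
  proof -
    have "T *\<^sub>v z = T *\<^sub>v y - T *\<^sub>v (transpose_mat B *\<^sub>v w)"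
      unfolding z_def using mult_minus_distrib_mat_vec[OF Tc y, of "transpose_mat B *\<^sub>v w"] BTc wc by simp
    also have "\<dots> = T *\<^sub>v y - T *\<^sub>v q" using V3 by simp
    also have "\<dots> = T *\<^sub>v (y - q)" using mult_minus_distrib_mat_vec[OF Tc y qc] by simp
    also have "\<dots> = T *\<^sub>v (M *\<^sub>v \<phi>h)" using yq Mphi by simp
    finally show ?thesis using V1 by simp
  qed
  define b where "b = \<phi>h - u"
  have bc: "b \<in> carrier_vec N" unfolding b_def using \<phi>c uc by simp
  have bS: "b \<in> S" unfolding b_def using SS.mins[OF \<phi>S uS] .
  have Mbc: "M *\<^sub>v b \<in> carrier_vec n" using Mc bc by simp
  have "M *\<^sub>v b = M *\<^sub>v \<phi>h - M *\<^sub>v u" unfolding b_def using mult_minus_distrib_mat_vec[OF Mc \<phi>c uc] .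
  then have "T *\<^sub>v (M *\<^sub>v b) = T *\<^sub>v (M *\<^sub>v \<phi>h) - T *\<^sub>v (M *\<^sub>v u)"
    using mult_minus_distrib_mat_vec[OF Tc, of "M *\<^sub>v \<phi>h" "M *\<^sub>v u"] Mc \<phi>c uc by simp
  also have "\<dots> = 0\<^sub>v N" using TMu Tc Mc uc by (intro eq_vecI) auto
  finally have TMb: "T *\<^sub>v (M *\<^sub>v b) = 0\<^sub>v N" .
  have "(M *\<^sub>v b) \<bullet> (M *\<^sub>v b) = (T *\<^sub>v (M *\<^sub>v b)) \<bullet> b"
    unfolding T_def using transpose_vec_mult_scalar[OF Mc bc Mbc] by simp
  also have "\<dots> = 0" unfolding TMb using bc by simp
  finally have Mb: "M *\<^sub>v b = 0\<^sub>v n" using self_zero[OF Mbc] by simp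
  have Xtb: "Xt *\<^sub>v b = 0\<^sub>v n"
  proof -
    have "M *\<^sub>v b = Xt *\<^sub>v (P *\<^sub>v b)" unfolding M_def using assoc_mult_mat_vec[OF Xt Pc bc] .
    then show ?thesis using Mb Pfix[OF bS] by simp
  qed
  have bK: "b \<in> mat_kernel Xt" by (rule mat_kernelI[OF Xt bc Xtb])
  have phiub: "\<phi>h = u + b" unfolding b_def using \<phi>c uc by (intro eq_vecI) auto
  have fin: "\<exists>b. b \<in> mat_kernel Xt \<inter> mat_kernel L \<inter> mat_kernel DmA \<and> \<phi>h = u + b
      \<and> (\<forall>i\<in>A. (D *\<^sub>v (u + b)) $ i > 0)"
  proof (intro exI conjI)
    show "b \<in> mat_kernel Xt \<inter> mat_kernel L \<inter> mat_kernel DmA" using bK bS unfolding S_def by blast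
    show "\<phi>h = u + b" by (rule phiub)
    show "\<forall>i\<in>A. (D *\<^sub>v (u + b)) $ i > 0" unfolding phiub[symmetric] using Adef by blast
  qed
  have ueq: "u = pinv (Xt * P) *\<^sub>v (y - pinv (P * transpose_mat Xt) *\<^sub>v w)"
    unfolding u_def B_def M_def pinvT[unfolded B_def M_def] ..
  show ?thesis using fin unfolding ueq Let_def Xt_def L_def DmA_def D_def A_def P_def S_def N_def w_def .
qed


end
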